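(* For $1<p<\infty$, every $L^p$-space endowed with a closed proper generating cone is a $\upsilon$-quasi-lattice. In particular, every $\ell^p$-space and every space $(\mathbb R^n,\|\cdot\|_p)$ endowed with a closed proper generating cone is a $\upsilon$-quasi-lattice. If, in addition, the space is monotone, it is also a $\mu$-quasi-lattice, and its $\upsilon$- and $\mu$-quasi-suprema coincide.
   Context: A cone in a real Banach space $X$ is $X_+$ with $X_++X_+\subseteq X_+$, $\lambda X_+\subseteq X_+$ for $\lambda\ge0$; proper: $X_+\cap(-X_+)=\{0\}$; generating: $X=X_+-X_+$; $x\le y$ means $y-x\in X_+$; monotone: $0\le x\le y$ implies $\|x\|\le\|y\|$. For $A\subseteq X$, $\upsilon(A)$ is the set of upper bounds and $\mu(A)$ the set of minimal upper bounds. Let $\sigma_{x,y}(z)=\|z-x\|+\|z-y\|$. $X$ (with closed cone) is a $\upsilon$-quasi-lattice (resp. $\mu$-quasi-lattice) if for all $x,y$ the set $\upsilon(\{x,y\})$ (resp. $\mu(\{x,y\})$) is non-empty and contains a unique minimizer of $\sigma_{x,y}$ on it, the $\upsilon$- (resp. $\mu$-) quasi-supremum. *)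

theory Defs
  imports "HOL-Analysis.Analysis"
begin

text \<open>The space L^p(M) is modelled by its set of representatives V (measurable
  functions with integrable p-th power) together with the L^p seminorm N.
  Elements of the actual Banach space are classes modulo N-null functions, so
  every notion below is stated modulo N-null differences (i.e. equality in the
  quotient is N (f - g) = 0).\<close>

definition Lp_set :: "'a measure \<Rightarrow> real \<Rightarrow> ('a \<Rightarrow> real) set" where
  "Lp_set M p = {f \<in> borel_measurable M. integrable M (\<lambda>x. \<bar>f x\<bar> powr p)}"

definition Lp_norm :: "'a measure \<Rightarrow> real \<Rightarrow> ('a \<Rightarrow> real) \<Rightarrow> real" where
  "Lp_norm M p f = (integral\<^sup>L M (\<lambda>x. \<bar>f x\<bar> powr p)) powr (1 / p)"

definition fdiff :: "('a \<Rightarrow> real) \<Rightarrow> ('a \<Rightarrow> real) \<Rightarrow> ('a \<Rightarrow> real)" where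
  "fdiff f g = (\<lambda>t. f t - g t)"

definition is_cone :: "('a \<Rightarrow> real) set \<Rightarrow> ('a \<Rightarrow> real) set \<Rightarrow> bool" where
  "is_cone V C \<longleftrightarrow> C \<subseteq> V \<and>
     (\<forall>f\<in>C. \<forall>g\<in>C. (\<lambda>t. f t + g t) \<in> C) \<and>
     (\<forall>f\<in>C. \<forall>c::real. c \<ge> 0 \<longrightarrow> (\<lambda>t. c * f t) \<in> C)"

definition cone_closed :: "('a \<Rightarrow> real) set \<Rightarrow> (('a \<Rightarrow> real) \<Rightarrow> real) \<Rightarrow> ('a \<Rightarrow> real) set \<Rightarrow> bool" where
  "cone_closed V N C \<longleftrightarrow> (\<forall>(s::nat \<Rightarrow> 'a \<Rightarrow> real) f.
      (\<forall>n. s n \<in> C) \<and> f \<in> V \<and> (\<lambda>n. N (fdiff (s n) f)) \<longlonglongrightarrow> 0 \<longrightarrow> f \<in> C)"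

definition cone_proper :: "(('a \<Rightarrow> real) \<Rightarrow> real) \<Rightarrow> ('a \<Rightarrow> real) set \<Rightarrow> bool" where
  "cone_proper N C \<longleftrightarrow> (\<forall>f\<in>C. (\<lambda>t. - f t) \<in> C \<longrightarrow> N f = 0)"

definition cone_generating :: "('a \<Rightarrow> real) set \<Rightarrow> (('a \<Rightarrow> real) \<Rightarrow> real) \<Rightarrow> ('a \<Rightarrow> real) set \<Rightarrow> bool" where
  "cone_generating V N C \<longleftrightarrow> (\<forall>f\<in>V. \<exists>g\<in>C. \<exists>h\<in>C. N (fdiff f (fdiff g h)) = 0)"

definition cone_monotone :: "(('a \<Rightarrow> real) \<Rightarrow> real) \<Rightarrow> ('a \<Rightarrow> real) set \<Rightarrow> bool" where
  "cone_monotone N C \<longleftrightarrow> (\<forall>f g. f \<in> C \<and> fdiff g f \<in> C \<longrightarrow> N f \<le> N g)"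

definition cle :: "('a \<Rightarrow> real) set \<Rightarrow> ('a \<Rightarrow> real) \<Rightarrow> ('a \<Rightarrow> real) \<Rightarrow> bool" where
  "cle C x y \<longleftrightarrow> fdiff y x \<in> C"

definition ubounds :: "('a \<Rightarrow> real) set \<Rightarrow> ('a \<Rightarrow> real) set \<Rightarrow> ('a \<Rightarrow> real) \<Rightarrow> ('a \<Rightarrow> real) \<Rightarrow> ('a \<Rightarrow> real) set" where
  "ubounds V C x y = {z \<in> V. cle C x z \<and> cle C y z}"

definition mubounds :: "('a \<Rightarrow> real) set \<Rightarrow> (('a \<Rightarrow> real) \<Rightarrow> real) \<Rightarrow> ('a \<Rightarrow> real) set \<Rightarrow> ('a \<Rightarrow> real) \<Rightarrow> ('a \<Rightarrow> real) \<Rightarrow> ('a \<Rightarrow> real) set" where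
  "mubounds V N C x y = {z \<in> ubounds V C x y.
      \<forall>w \<in> ubounds V C x y. cle C w z \<longrightarrow> N (fdiff z w) = 0}"

definition sigma :: "(('a \<Rightarrow> real) \<Rightarrow> real) \<Rightarrow> ('a \<Rightarrow> real) \<Rightarrow> ('a \<Rightarrow> real) \<Rightarrow> ('a \<Rightarrow> real) \<Rightarrow> real" where
  "sigma N x y z = N (fdiff z x) + N (fdiff z y)"

definition is_minimizer :: "('b \<Rightarrow> real) \<Rightarrow> 'b set \<Rightarrow> 'b \<Rightarrow> bool" where
  "is_minimizer F S z \<longleftrightarrow> z \<in> S \<and> (\<forall>w\<in>S. F z \<le> F w)"

definition quasi_lattice_wrt ::
  "('a \<Rightarrow> real) set \<Rightarrow> (('a \<Rightarrow> real) \<Rightarrow> real) \<Rightarrow>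
   (('a \<Rightarrow> real) \<Rightarrow> ('a \<Rightarrow> real) \<Rightarrow> ('a \<Rightarrow> real) set) \<Rightarrow> bool" where
  "quasi_lattice_wrt V N B \<longleftrightarrow> (\<forall>x\<in>V. \<forall>y\<in>V.
      B x y \<noteq> {} \<and>
      (\<exists>z. is_minimizer (sigma N x y) (B x y) z) \<and>
      (\<forall>z z'. is_minimizer (sigma N x y) (B x y) z \<and> is_minimizer (sigma N x y) (B x y) z'
          \<longrightarrow> N (fdiff z z') = 0))"

definition upsilon_quasi_lattice :: "('a \<Rightarrow> real) set \<Rightarrow> (('a \<Rightarrow> real) \<Rightarrow> real) \<Rightarrow> ('a \<Rightarrow> real) set \<Rightarrow> bool" where
  "upsilon_quasi_lattice V N C \<longleftrightarrow> cone_closed V N C \<and> quasi_lattice_wrt V N (ubounds V C)"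

definition mu_quasi_lattice :: "('a \<Rightarrow> real) set \<Rightarrow> (('a \<Rightarrow> real) \<Rightarrow> real) \<Rightarrow> ('a \<Rightarrow> real) set \<Rightarrow> bool" where
  "mu_quasi_lattice V N C \<longleftrightarrow> cone_closed V N C \<and> quasi_lattice_wrt V N (mubounds V N C)"

definition quasi_suprema_coincide :: "('a \<Rightarrow> real) set \<Rightarrow> (('a \<Rightarrow> real) \<Rightarrow> real) \<Rightarrow> ('a \<Rightarrow> real) set \<Rightarrow> bool" where
  "quasi_suprema_coincide V N C \<longleftrightarrow> (\<forall>x\<in>V. \<forall>y\<in>V. \<forall>z z'.
      is_minimizer (sigma N x y) (ubounds V C x y) z \<and>
      is_minimizer (sigma N x y) (mubounds V N C x y) z' \<longrightarrow> N (fdiff z z') = 0)"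

definition Lp_claim :: "'a measure \<Rightarrow> real \<Rightarrow> bool" where
  "Lp_claim M p \<longleftrightarrow> (\<forall>C. let V = Lp_set M p; N = Lp_norm M p in
      is_cone V C \<and> cone_closed V N C \<and> cone_proper N C \<and> cone_generating V N C \<longrightarrow>
        upsilon_quasi_lattice V N C \<and>
        (cone_monotone N C \<longrightarrow> mu_quasi_lattice V N C \<and> quasi_suprema_coincide V N C))"

end

theory Submission
  imports Defs "HOL-Analysis.Analysis"
begin

lemma powr_convex0:
  fixes x y l p :: real
  assumes "1 \<le> p" "0 \<le> x" "0 \<le> y" "0 \<le> l" "l \<le> 1"
  shows "(l*x + (1-l)*y) powr p \<le> l * x powr p + (1-l) * y powr p"
proof -
  have pw: "c powr p \<le> c" if "0 \<le> c" "c \<le> 1" for c :: real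
    using powr_mono'[of 1 p c] that assms(1) by simp
  show ?thesis
  proof (cases "x = 0 \<or> y = 0")
    case True
    then show ?thesis
    proof
      assume x0: "x = 0"
      have "((1-l)*y) powr p = (1-l) powr p * y powr p" using assms by (simp add: powr_mult)
      also have "\<dots> \<le> (1-l) * y powr p" using pw[of "1-l"] assms by (intro mult_right_mono) auto
      finally show ?thesis using x0 assms(1) by simp
    next
      assume y0: "y = 0"
      have "(l*x) powr p = l powr p * x powr p" using assms by (simp add: powr_mult)
      also have "\<dots> \<le> l * x powr p" using pw[of "l"] assms by (intro mult_right_mono) auto
      finally show ?thesis using y0 assms(1) by simp
    qed
  next
    case False
    with assms have "x > 0" "y > 0" by auto
    from convex_onD[OF powr_convex[OF assms(1)], of "1-l" x y] this assms
    show ?thesis by (simp add: algebra_simps)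
  qed
qed

lemma abs_powr_convex:
  fixes x y l p :: real
  assumes "1 \<le> p" "0 \<le> l" "l \<le> 1"
  shows "\<bar>l*x + (1-l)*y\<bar> powr p \<le> l * \<bar>x\<bar> powr p + (1-l) * \<bar>y\<bar> powr p"
proof -
  have "\<bar>l*x + (1-l)*y\<bar> \<le> l*\<bar>x\<bar> + (1-l)*\<bar>y\<bar>"
    using assms by (metis abs_mult abs_of_nonneg abs_triangle_ineq diff_ge_0_iff_ge)
  then have "\<bar>l*x + (1-l)*y\<bar> powr p \<le> (l*\<bar>x\<bar> + (1-l)*\<bar>y\<bar>) powr p"
    using assms by (intro powr_mono2) auto
  also have "\<dots> \<le> l * \<bar>x\<bar> powr p + (1-l) * \<bar>y\<bar> powr p"
    using assms by (intro powr_convex0) auto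
  finally show ?thesis .
qed

lemma powr_strict_mid:
  fixes s t p :: real
  assumes "1 < p" "0 \<le> s" "s < t"
  shows "((s+t)/2) powr p < (s powr p + t powr p)/2"
proof (cases "s = 0")
  case True
  have "(t/2) powr p = t powr p / 2 powr p" by (simp add: powr_divide)
  moreover have "2 powr p > 2 powr 1" using assms by (intro powr_less_mono) auto
  moreover have "t powr p > 0" using assms True by simp
  ultimately have "(t/2) powr p < t powr p / 2"
    using divide_strict_left_mono[of 2 "2 powr p" "t powr p"] by simp
  with True show ?thesis using assms by simp
next
  case False
  hence s0: "s > 0" using assms by simp
  define m where "m = (s+t)/2"
  have sm: "s < m" "m < t" using assms by (auto simp: m_def)
  have der: "DERIV (\<lambda>x. x powr p) x :> p * x powr (p - 1)" if "x > 0" for x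
    using that by (auto intro!: derivative_eq_intros simp: powr_diff)
  obtain z1 where z1: "s < z1" "z1 < m" "m powr p - s powr p = (m - s) * (p * z1 powr (p-1))"
    using MVT2[OF sm(1), of "\<lambda>x. x powr p" "\<lambda>x. p * x powr (p-1)"] der s0 by force
  obtain z2 where z2: "m < z2" "z2 < t" "t powr p - m powr p = (t - m) * (p * z2 powr (p-1))"
    using MVT2[OF sm(2), of "\<lambda>x. x powr p" "\<lambda>x. p * x powr (p-1)"] der s0 sm by force
  have "z1 powr (p-1) < z2 powr (p-1)"
    using z1 z2 s0 assms by (intro powr_less_mono2) auto
  moreover have "m - s = t - m" "t - m > 0" using assms by (auto simp: m_def field_simps)
  ultimately have "(t - m) * (p * z1 powr (p-1)) < (t - m) * (p * z2 powr (p-1))"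
    using assms by (intro mult_strict_left_mono) auto
  hence "(m - s) * (p * z1 powr (p-1)) < (t - m) * (p * z2 powr (p-1))"
    using \<open>m - s = t - m\<close> by metis
  hence "m powr p - s powr p < t powr p - m powr p" using z1 z2 by simp
  thus ?thesis by (simp add: m_def)
qed



lemma mid_nonneg:
  fixes a b p :: real
  assumes "1 \<le> p"
  shows "\<bar>(a+b)/2\<bar> powr p \<le> (\<bar>a\<bar> powr p + \<bar>b\<bar> powr p)/2"
  using abs_powr_convex[OF assms, of "1/2" a b] by (simp add: field_simps)

lemma mid_strict:
  fixes a b p :: real
  assumes "1 < p" "a \<noteq> b"
  shows "\<bar>(a+b)/2\<bar> powr p < (\<bar>a\<bar> powr p + \<bar>b\<bar> powr p)/2"
proof (cases "\<bar>a\<bar> = \<bar>b\<bar>")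
  case True
  with assms have "b = -a" "a \<noteq> 0" by (auto simp: abs_eq_iff)
  then show ?thesis using assms by simp
next
  case False
  have "\<bar>(a+b)/2\<bar> \<le> (\<bar>a\<bar>+\<bar>b\<bar>)/2" by simp
  hence "\<bar>(a+b)/2\<bar> powr p \<le> ((\<bar>a\<bar>+\<bar>b\<bar>)/2) powr p" using assms by (intro powr_mono2) auto
  also have "\<dots> < (\<bar>a\<bar> powr p + \<bar>b\<bar> powr p)/2"
  proof (cases "\<bar>a\<bar> < \<bar>b\<bar>")
    case True
    then show ?thesis using powr_strict_mid[OF assms(1), of "\<bar>a\<bar>" "\<bar>b\<bar>"] by simp
  next
    case False
    then have "\<bar>b\<bar> < \<bar>a\<bar>" using \<open>\<bar>a\<bar> \<noteq> \<bar>b\<bar>\<close> by simp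
    then show ?thesis using powr_strict_mid[OF assms(1), of "\<bar>b\<bar>" "\<bar>a\<bar>"] by (simp add: add.commute)
  qed
  finally show ?thesis .
qed

definition gfun :: "real \<Rightarrow> real \<Rightarrow> real \<Rightarrow> real" where
  "gfun p a b = (\<bar>a\<bar> powr p + \<bar>b\<bar> powr p)/2 - \<bar>(a+b)/2\<bar> powr p"

lemma gfun_cont: "0 < p \<Longrightarrow> continuous_on S (\<lambda>z. gfun p (fst z) (snd z))"
  unfolding gfun_def
  by (intro continuous_intros continuous_on_powr') auto

lemma compact_min_pos:
  fixes p c :: real
  assumes "1 < p" "0 < c"
  shows "\<exists>m>0. \<forall>a b. max \<bar>a\<bar> \<bar>b\<bar> = 1 \<and> c \<le> \<bar>a - b\<bar> \<longrightarrow> m \<le> gfun p a b"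
proof -
  define S where "S = ({-1..1} \<times> {-1..1}) \<inter> ({z::real\<times>real. max \<bar>fst z\<bar> \<bar>snd z\<bar> = 1} \<inter> {z. c \<le> \<bar>fst z - snd z\<bar>})"
  have cS: "compact S" unfolding S_def
    by (intro compact_Int_closed compact_Times compact_Icc closed_Int closed_Collect_eq closed_Collect_le)
       (auto intro!: continuous_intros)
  show ?thesis
  proof (cases "S = {}")
    case True
    have "False" if "max \<bar>a\<bar> \<bar>b\<bar> = 1" "c \<le> \<bar>a - b\<bar>" for a b :: real
    proof -
      have "(a,b) \<in> S" using that unfolding S_def by (auto simp: max_def split: if_splits)
      with True show False by simp
    qed
    then show ?thesis by (intro exI[of _ 1]) auto
  next
    case False
    obtain z0 where z0: "z0 \<in> S" "\<And>z. z \<in> S \<Longrightarrow> gfun p (fst z0) (snd z0) \<le> gfun p (fst z) (snd z)"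
      using continuous_attains_inf[OF cS False gfun_cont[of p S]] assms by auto
    have "fst z0 \<noteq> snd z0" using z0(1) assms unfolding S_def by auto
    hence pos: "gfun p (fst z0) (snd z0) > 0"
      using mid_strict[OF assms(1)] unfolding gfun_def by simp
    show ?thesis
    proof (intro exI[of _ "gfun p (fst z0) (snd z0)"] conjI allI impI pos)
      fix a b :: real assume "max \<bar>a\<bar> \<bar>b\<bar> = 1 \<and> c \<le> \<bar>a - b\<bar>"
      hence "(a,b) \<in> S" unfolding S_def by (auto simp: max_def split: if_splits)
      from z0(2)[OF this] show "gfun p (fst z0) (snd z0) \<le> gfun p a b" by simp
    qed
  qed
qed

lemma gfun_scale:
  fixes p a b M :: real
  assumes "M > 0"
  shows "gfun p (a/M) (b/M) = gfun p a b / M powr p"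
proof -
  have "(a/M + b/M)/2 = ((a+b)/2)/M" using assms by (simp add: field_simps)
  have "\<bar>((a+b)/2)/M\<bar> powr p = \<bar>(a+b)/2\<bar> powr p / M powr p"
    using assms by (simp only: abs_divide powr_divide abs_of_pos)
  then have "\<bar>(a/M + b/M)/2\<bar> powr p = \<bar>(a+b)/2\<bar> powr p / M powr p"
    by (simp only: \<open>(a/M + b/M)/2 = ((a+b)/2)/M\<close>)
  moreover have "\<bar>a/M\<bar> powr p = \<bar>a\<bar> powr p / M powr p" "\<bar>b/M\<bar> powr p = \<bar>b\<bar> powr p / M powr p"
    using assms by (simp_all only: abs_divide powr_divide abs_of_pos)
  ultimately show ?thesis unfolding gfun_def by (simp add: diff_divide_distrib add_divide_distrib)
qed

lemma pointwise_UC: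
  fixes p e :: real
  assumes "1 < p" "0 < e"
  shows "\<exists>K\<ge>0. \<forall>a b. \<bar>a - b\<bar> powr p \<le> e * (\<bar>a\<bar> powr p + \<bar>b\<bar> powr p) + K * gfun p a b"
proof -
  define c where "c = e powr (1/p)"
  have c0: "c > 0" using assms by (simp add: c_def)
  have cp: "c powr p = e" using assms by (simp add: c_def powr_powr)
  obtain m where m: "m > 0" "\<And>a b. max \<bar>a\<bar> \<bar>b\<bar> = 1 \<Longrightarrow> c \<le> \<bar>a - b\<bar> \<Longrightarrow> m \<le> gfun p a b"
    using compact_min_pos[OF assms(1) c0] by blast
  define K where "K = 2 powr p / m"
  have gnn: "gfun p a b \<ge> 0" for a b using mid_nonneg[of p a b] assms unfolding gfun_def by simp
  show ?thesis
  proof (intro exI[of _ K] conjI allI)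
    show "K \<ge> 0" using m by (simp add: K_def)
    fix a b :: real
    define M where "M = max \<bar>a\<bar> \<bar>b\<bar>"
    have Mp: "M powr p \<le> \<bar>a\<bar> powr p + \<bar>b\<bar> powr p"
      by (simp add: M_def max_def)
    show "\<bar>a - b\<bar> powr p \<le> e * (\<bar>a\<bar> powr p + \<bar>b\<bar> powr p) + K * gfun p a b"
    proof (cases "M = 0")
      case True
      hence "a = 0" "b = 0" by (auto simp: M_def max_def split: if_splits)
      then show ?thesis by (simp add: gfun_def)
    next
      case False
      moreover have "M \<ge> 0" by (simp add: M_def le_max_iff_disj)
      ultimately have M0: "M > 0" by linarith
      show ?thesis
      proof (cases "\<bar>a - b\<bar> < c * M")
        case True
        have "\<bar>a - b\<bar> powr p \<le> (c*M) powr p" using True assms by (intro powr_mono2) auto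
        also have "\<dots> = e * M powr p" using c0 M0 cp by (simp add: powr_mult)
        also have "\<dots> \<le> e * (\<bar>a\<bar> powr p + \<bar>b\<bar> powr p)" using Mp assms by simp
        finally show ?thesis using gnn[of a b] m by (simp add: K_def add_increasing2)
      next
        case False
        have "max \<bar>a/M\<bar> \<bar>b/M\<bar> = max \<bar>a\<bar> \<bar>b\<bar> / M" using M0 by (simp add: max_def divide_right_mono divide_le_cancel)
        hence mx: "max \<bar>a/M\<bar> \<bar>b/M\<bar> = 1" using M0 by (simp add: M_def)
        have "c \<le> \<bar>a - b\<bar> / M" using False M0 by (simp add: field_simps)
        hence "c \<le> \<bar>a/M - b/M\<bar>" using M0 by (simp add: diff_divide_distrib[symmetric])
        from m(2)[OF mx this] have "m \<le> gfun p a b / M powr p" using gfun_scale[OF M0] by simp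
        hence g1: "m * M powr p \<le> gfun p a b" using M0 by (simp add: field_simps)
        have "\<bar>a - b\<bar> \<le> 2 * M" by (simp add: M_def max_def abs_triangle_ineq4) linarith
        hence "\<bar>a - b\<bar> powr p \<le> (2*M) powr p" using assms by (intro powr_mono2) auto
        also have "\<dots> = 2 powr p * M powr p" using M0 by (simp add: powr_mult)
        also have "\<dots> = K * (m * M powr p)" using m by (simp add: K_def)
        also have "\<dots> \<le> K * gfun p a b" using g1 m by (intro mult_left_mono) (auto simp: K_def)
        finally show ?thesis using assms by (simp add: add_increasing)
      qed
    qed
  qed
qed



lemma Lp_setI: "f \<in> borel_measurable M \<Longrightarrow> integrable M (\<lambda>x. \<bar>f x\<bar> powr p) \<Longrightarrow> f \<in> Lp_set M p"
  by (simp add: Lp_set_def)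
lemma Lp_setD: "f \<in> Lp_set M p \<Longrightarrow> f \<in> borel_measurable M"
  "f \<in> Lp_set M p \<Longrightarrow> integrable M (\<lambda>x. \<bar>f x\<bar> powr p)"
  by (auto simp: Lp_set_def)

definition Ip :: "'a measure \<Rightarrow> real \<Rightarrow> ('a \<Rightarrow> real) \<Rightarrow> real" where
  "Ip M p f = integral\<^sup>L M (\<lambda>x. \<bar>f x\<bar> powr p)"

lemma Ip_nonneg: "0 \<le> Ip M p f"
  unfolding Ip_def by (intro integral_nonneg_AE) auto

lemma Lp_norm_Ip: "Lp_norm M p f = Ip M p f powr (1/p)"
  by (simp add: Lp_norm_def Ip_def)

lemma Lp_norm_nonneg: "0 \<le> Lp_norm M p f"
  by (simp add: Lp_norm_def)

lemma Lp_norm_powr: "0 < p \<Longrightarrow> Lp_norm M p f powr p = Ip M p f"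
  using Ip_nonneg[of M p f] by (simp add: Lp_norm_Ip powr_powr)

lemma Lp_norm_le_iff: "0 < p \<Longrightarrow> 0 \<le> A \<Longrightarrow> Lp_norm M p f \<le> A \<longleftrightarrow> Ip M p f \<le> A powr p"
proof -
  assume p: "0 < p" and A: "0 \<le> A"
  have "Lp_norm M p f \<le> A \<longleftrightarrow> Lp_norm M p f powr p \<le> A powr p"
    using p A Lp_norm_nonneg[of M p f] by (meson powr_le_cancel_iff powr_mono2 less_imp_le
      order.strict_implies_order not_le powr_less_mono2)
  moreover have e: "Lp_norm M p f powr p = Ip M p f" by (rule Lp_norm_powr[OF p])
  ultimately show ?thesis by (simp only:)
qed

context
  fixes M :: "'a measure" and p :: real
  assumes p1: "1 < p"
begin

lemma Lp_meas_powr[measurable]: "f \<in> borel_measurable M \<Longrightarrow> (\<lambda>x. \<bar>f x\<bar> powr p) \<in> borel_measurable M"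
  by measurable

lemma Lp_zero: "(\<lambda>t. 0) \<in> Lp_set M p"
  using p1 by (intro Lp_setI) auto

lemma Lp_scale: "f \<in> Lp_set M p \<Longrightarrow> (\<lambda>t. c * f t) \<in> Lp_set M p"
proof -
  assume f: "f \<in> Lp_set M p"
  note [measurable] = Lp_setD(1)[OF f]
  have "integrable M (\<lambda>x. \<bar>c\<bar> powr p * \<bar>f x\<bar> powr p)"
    using Lp_setD(2)[OF f] by (intro integrable_mult_right)
  then show ?thesis
    by (intro Lp_setI) (auto simp: abs_mult powr_mult)
qed

lemma Lp_add: "f \<in> Lp_set M p \<Longrightarrow> g \<in> Lp_set M p \<Longrightarrow> (\<lambda>t. f t + g t) \<in> Lp_set M p"
proof -
  assume f: "f \<in> Lp_set M p" and g: "g \<in> Lp_set M p"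
  note [measurable] = Lp_setD(1)[OF f] Lp_setD(1)[OF g]
  have int: "integrable M (\<lambda>x. 2 powr p * (\<bar>f x\<bar> powr p + \<bar>g x\<bar> powr p))"
    using Lp_setD(2)[OF f] Lp_setD(2)[OF g] by (intro integrable_mult_right Bochner_Integration.integrable_add)
  have pt: "\<bar>f x + g x\<bar> powr p \<le> 2 powr p * (\<bar>f x\<bar> powr p + \<bar>g x\<bar> powr p)" for x
  proof -
    have "\<bar>f x + g x\<bar> powr p = (2 * \<bar>(f x + g x)/2\<bar>) powr p" by simp
    also have "\<dots> = 2 powr p * \<bar>(f x + g x)/2\<bar> powr p" by (simp add: powr_mult powr_divide)
    also have "\<dots> \<le> 2 powr p * ((\<bar>f x\<bar> powr p + \<bar>g x\<bar> powr p)/2)"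
      using mid_nonneg[of p "f x" "g x"] p1 by (intro mult_left_mono) auto
    also have "\<dots> \<le> 2 powr p * (\<bar>f x\<bar> powr p + \<bar>g x\<bar> powr p)"
      by (intro mult_left_mono) auto
    finally show ?thesis .
  qed
  show ?thesis
    by (intro Lp_setI) (auto intro!: Bochner_Integration.integrable_bound[OF int] AE_I2 order.trans[OF pt])
qed

lemma Lp_diff: "f \<in> Lp_set M p \<Longrightarrow> g \<in> Lp_set M p \<Longrightarrow> fdiff f g \<in> Lp_set M p"
  using Lp_add[of f "\<lambda>t. (-1) * g t"] Lp_scale[of g "-1"] by (simp add: fdiff_def)

lemma Lp_norm_scale: "Lp_norm M p (\<lambda>t. c * f t) = \<bar>c\<bar> * Lp_norm M p f"
proof -
  have "Ip M p (\<lambda>t. c * f t) = \<bar>c\<bar> powr p * Ip M p f"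
    by (simp add: Ip_def abs_mult powr_mult)
  then show ?thesis using p1 Ip_nonneg[of M p f]
    by (simp add: Lp_norm_Ip powr_mult powr_powr)
qed

lemma Ip_add_le:
  assumes f: "f \<in> Lp_set M p" and g: "g \<in> Lp_set M p"
    and A: "0 < A" and B: "0 < B" and fA: "Ip M p f \<le> A powr p" and gB: "Ip M p g \<le> B powr p"
  shows "Ip M p (\<lambda>t. f t + g t) \<le> (A + B) powr p"
proof -
  note [measurable] = Lp_setD(1)[OF f] Lp_setD(1)[OF g]
  define l where "l = A / (A + B)"
  have l: "0 \<le> l" "l \<le> 1" "1 - l = B / (A + B)" using A B by (auto simp: l_def field_simps)
  have pt: "\<bar>f x + g x\<bar> powr p \<le> (A+B) powr p * (l / A powr p * \<bar>f x\<bar> powr p + (1-l) / B powr p * \<bar>g x\<bar> powr p)" for x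
  proof -
    have e1: "(A + B) * (l * (f x / A)) = f x" using A B by (simp add: l_def field_simps)
    have e2: "(A + B) * ((1-l) * (g x / B)) = g x" using A B by (simp add: l(3) field_simps)
    have "f x + g x = (A + B) * (l * (f x / A) + (1-l) * (g x / B))"
      using e1 e2 by (simp add: distrib_left)
    hence "\<bar>f x + g x\<bar> powr p = (A+B) powr p * \<bar>l * (f x / A) + (1-l) * (g x / B)\<bar> powr p"
      using A B by (simp add: abs_mult powr_mult)
    also have "\<dots> \<le> (A+B) powr p * (l * \<bar>f x / A\<bar> powr p + (1-l) * \<bar>g x / B\<bar> powr p)"
      using abs_powr_convex[of p l "f x / A" "g x / B"] p1 l by (intro mult_left_mono) auto
    also have "\<dots> = (A+B) powr p * (l / A powr p * \<bar>f x\<bar> powr p + (1-l) / B powr p * \<bar>g x\<bar> powr p)"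
      using A B by (simp add: abs_divide powr_divide)
    finally show ?thesis .
  qed
  have intf: "integrable M (\<lambda>x. \<bar>f x\<bar> powr p)" and intg: "integrable M (\<lambda>x. \<bar>g x\<bar> powr p)"
    using Lp_setD(2) f g by auto
  have intfg: "integrable M (\<lambda>x. \<bar>f x + g x\<bar> powr p)" using Lp_setD(2)[OF Lp_add[OF f g]] by simp
  have "Ip M p (\<lambda>t. f t + g t) \<le> integral\<^sup>L M (\<lambda>x. (A+B) powr p * (l / A powr p * \<bar>f x\<bar> powr p + (1-l) / B powr p * \<bar>g x\<bar> powr p))"
    unfolding Ip_def using intf intg intfg pt by (intro integral_mono) auto
  also have "\<dots> = (A+B) powr p * (l / A powr p * Ip M p f + (1-l) / B powr p * Ip M p g)"
    using intf intg by (simp add: Ip_def)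
  also have "\<dots> \<le> (A+B) powr p * (l / A powr p * A powr p + (1-l) / B powr p * B powr p)"
    using fA gB l A B by (intro mult_left_mono add_mono mult_left_mono) auto
  also have "\<dots> = (A+B) powr p" using A B by simp
  finally show ?thesis .
qed

lemma Lp_norm_tri:
  assumes f: "f \<in> Lp_set M p" and g: "g \<in> Lp_set M p"
  shows "Lp_norm M p (\<lambda>t. f t + g t) \<le> Lp_norm M p f + Lp_norm M p g"
proof -
  have p0: "0 < p" using p1 by simp
  have "Lp_norm M p (\<lambda>t. f t + g t) \<le> Lp_norm M p f + Lp_norm M p g + 2 * d" if d: "d > 0" for d
  proof -
    define A where "A = Lp_norm M p f + d"
    define B where "B = Lp_norm M p g + d"
    have A: "A > 0" "Lp_norm M p f \<le> A" and B: "B > 0" "Lp_norm M p g \<le> B"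
      using d Lp_norm_nonneg[of M p f] Lp_norm_nonneg[of M p g] by (auto simp: A_def B_def)
    have "Ip M p (\<lambda>t. f t + g t) \<le> (A + B) powr p"
      using A B by (intro Ip_add_le f g) (auto simp: Lp_norm_le_iff[OF p0, symmetric])
    then have "Lp_norm M p (\<lambda>t. f t + g t) \<le> A + B"
      using A B by (subst Lp_norm_le_iff[OF p0]) auto
    then show ?thesis by (simp add: A_def B_def)
  qed
  note * = this
  show ?thesis
  proof (rule field_le_epsilon)
    fix e :: real assume "0 < e"
    then show "Lp_norm M p (\<lambda>t. f t + g t) \<le> Lp_norm M p f + Lp_norm M p g + e"
      using *[of "e/2"] by simp
  qed
qed

end


context
  fixes M :: "'a measure" and p :: real
  assumes p1: "1 < p"
begin

lemma Lp_mid: "u \<in> Lp_set M p \<Longrightarrow> v \<in> Lp_set M p \<Longrightarrow> (\<lambda>t. (u t + v t)/2) \<in> Lp_set M p"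
  using Lp_scale[OF p1 Lp_add[OF p1], where c="1/2"] by simp

lemma Lp_abs: "f \<in> Lp_set M p \<Longrightarrow> (\<lambda>t. \<bar>f t\<bar>) \<in> Lp_set M p"
  by (auto simp: Lp_set_def)

lemma Lp_norm_abs: "Lp_norm M p (\<lambda>t. \<bar>f t\<bar>) = Lp_norm M p f"
  by (simp add: Lp_norm_def)

lemma Lp_norm_sym: "Lp_norm M p (fdiff a b) = Lp_norm M p (fdiff b a)"
proof -
  have "fdiff b a = (\<lambda>t. (-1) * fdiff a b t)" by (auto simp: fdiff_def)
  then show ?thesis using Lp_norm_scale[OF p1, where c="-1" and f="fdiff a b"] by simp
qed

lemma Lp_norm_fdiff_tri:
  assumes "a \<in> Lp_set M p" "b \<in> Lp_set M p" "c \<in> Lp_set M p"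
  shows "Lp_norm M p (fdiff a c) \<le> Lp_norm M p (fdiff a b) + Lp_norm M p (fdiff b c)"
proof -
  have "fdiff a c = (\<lambda>t. fdiff a b t + fdiff b c t)" by (auto simp: fdiff_def)
  then show ?thesis using Lp_norm_tri[OF p1 Lp_diff[OF p1] Lp_diff[OF p1]] assms by metis
qed

lemma Lp_UC:
  assumes e: "0 < e"
  shows "\<exists>K\<ge>0. \<forall>u\<in>Lp_set M p. \<forall>v\<in>Lp_set M p. Ip M p (fdiff u v) \<le>
     e * (Ip M p u + Ip M p v) + K * ((Ip M p u + Ip M p v)/2 - Ip M p (\<lambda>t. (u t + v t)/2))"
proof -
  obtain K where K: "K \<ge> 0" "\<And>a b. \<bar>a - b\<bar> powr p \<le> e * (\<bar>a\<bar> powr p + \<bar>b\<bar> powr p) + K * gfun p a b"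
    using pointwise_UC[OF p1 e] by blast
  show ?thesis
  proof (intro exI[of _ K] conjI ballI K(1))
    fix u v assume u: "u \<in> Lp_set M p" and v: "v \<in> Lp_set M p"
    have iu: "integrable M (\<lambda>x. \<bar>u x\<bar> powr p)" and iv: "integrable M (\<lambda>x. \<bar>v x\<bar> powr p)"
      using u v by (auto simp: Lp_set_def)
    have id: "integrable M (\<lambda>x. \<bar>u x - v x\<bar> powr p)"
      using Lp_setD(2)[OF Lp_diff[OF p1 u v]] by (simp add: fdiff_def)
    have im: "integrable M (\<lambda>x. \<bar>(u x + v x)/2\<bar> powr p)"
      using Lp_setD(2)[OF Lp_mid[OF u v]] by simp
    have "Ip M p (fdiff u v) \<le> integral\<^sup>L M (\<lambda>x. e * (\<bar>u x\<bar> powr p + \<bar>v x\<bar> powr p) +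
        K * ((\<bar>u x\<bar> powr p + \<bar>v x\<bar> powr p)/2 - \<bar>(u x + v x)/2\<bar> powr p))"
      unfolding Ip_def fdiff_def using K(2) iu iv id im unfolding gfun_def
      by (intro integral_mono) auto
    also have "\<dots> = e * (Ip M p u + Ip M p v) + K * ((Ip M p u + Ip M p v)/2 - Ip M p (\<lambda>t. (u t + v t)/2))"
      using iu iv im by (simp add: Ip_def)
    finally show "Ip M p (fdiff u v) \<le> e * (Ip M p u + Ip M p v) + K * ((Ip M p u + Ip M p v)/2 - Ip M p (\<lambda>t. (u t + v t)/2))" .
  qed
qed

end


context
  fixes M :: "'a measure" and p :: real
  assumes p1: "1 < p"
begin

lemma Lp_nn_Ip: "f \<in> Lp_set M p \<Longrightarrow> (\<integral>\<^sup>+x. ennreal (\<bar>f x\<bar> powr p) \<partial>M) = ennreal (Ip M p f)"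
  unfolding Ip_def by (intro nn_integral_eq_integral) (auto simp: Lp_set_def)

lemma Lp_from_nn:
  assumes [measurable]: "f \<in> borel_measurable M"
    and fin: "(\<integral>\<^sup>+x. ennreal (\<bar>f x\<bar> powr p) \<partial>M) \<le> ennreal B" and B0: "0 \<le> B"
  shows "f \<in> Lp_set M p" "Ip M p f \<le> B"
proof -
  have "integrable M (\<lambda>x. \<bar>f x\<bar> powr p)"
    using fin by (intro integrableI_nonneg) (auto simp: order_le_less_trans)
  then show fV: "f \<in> Lp_set M p" by (simp add: Lp_set_def)
  show "Ip M p f \<le> B"
    using B0 fin Lp_nn_Ip[OF fV] by (simp add: ennreal_le_iff)
qed

lemma Lp_complete:
  assumes s: "\<And>n. s n \<in> Lp_set M p"
    and C: "\<And>e. e > 0 \<Longrightarrow> \<exists>n0. \<forall>i\<ge>n0. \<forall>j\<ge>n0. Lp_norm M p (fdiff (s i) (s j)) < e"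
  shows "\<exists>f\<in>Lp_set M p. (\<lambda>n. Lp_norm M p (fdiff (s n) f)) \<longlonglongrightarrow> 0"
proof -
  have p0: "0 < p" using p1 by simp
  note smeas[measurable] = Lp_setD(1)[OF s]
  have "\<exists>r. \<forall>n. (\<forall>i\<ge>r n. \<forall>j\<ge>r n. Lp_norm M p (fdiff (s i) (s j)) < (1/2)^n) \<and> r n < r (Suc n)"
  proof (intro dependent_nat_choice, goal_cases)
    case 1
    then show ?case using C[of 1] by auto
  next
    case (2 x n)
    obtain N where N: "\<And>i j. i \<ge> N \<Longrightarrow> j \<ge> N \<Longrightarrow> Lp_norm M p (fdiff (s i) (s j)) < (1/2)^Suc n"
      using C[of "(1/2)^Suc n"] by auto
    show ?case by (intro exI[of _ "max N (Suc x)"] conjI allI impI N) auto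
  qed
  then obtain r where rC: "\<And>n i j. i \<ge> r n \<Longrightarrow> j \<ge> r n \<Longrightarrow> Lp_norm M p (fdiff (s i) (s j)) < (1/2)^n"
    and rinc: "\<And>n. r n < r (Suc n)" by blast
  have sm: "strict_mono r" using rinc by (simp add: strict_mono_Suc_iff)
  define d where "d i = fdiff (s (r (Suc i))) (s (r i))" for i
  have dV: "d i \<in> Lp_set M p" for i unfolding d_def by (intro Lp_diff[OF p1] s)
  have dN: "Lp_norm M p (d i) < (1/2)^i" for i
    unfolding d_def using rC[of i] rinc[of i] by auto
  note dmeas[measurable] = Lp_setD(1)[OF dV]
  define G where "G n = (\<lambda>x. \<Sum>i<n. \<bar>d i x\<bar>)" for n
  have G: "G n \<in> Lp_set M p \<and> Lp_norm M p (G n) \<le> 2 - 2 * (1/2)^n" for n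
  proof (induction n)
    case 0
    have "G 0 = (\<lambda>t. 0)" by (simp add: G_def)
    then show ?case using Lp_zero[OF p1] by (simp add: Lp_norm_def)
  next
    case (Suc n)
    have eq: "G (Suc n) = (\<lambda>t. G n t + \<bar>d n t\<bar>)" by (simp add: G_def)
    have "Lp_norm M p (G (Suc n)) \<le> Lp_norm M p (G n) + Lp_norm M p (\<lambda>t. \<bar>d n t\<bar>)"
      unfolding eq using Suc Lp_abs[OF p1 dV] by (intro Lp_norm_tri[OF p1]) auto
    also have "\<dots> \<le> 2 - 2 * (1/2)^n + (1/2)^n"
      using Suc dN[of n] Lp_norm_abs[OF p1, where M=M and f="d n"] by simp
    finally show ?case unfolding eq using Suc Lp_add[OF p1 _ Lp_abs[OF p1 dV]] by simp
  qed
  have Gb: "Ip M p (G n) \<le> 2 powr p" for n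
  proof -
    have "(0::real) \<le> 2 * (1/2)^n" by simp
    hence "Lp_norm M p (G n) \<le> 2" using G[of n] by linarith
    then show ?thesis using Lp_norm_le_iff[OF p0, of 2 M "G n"] by simp
  qed
  have Gnn: "0 \<le> G n x" for n x by (simp add: G_def sum_nonneg)
  have Gmono: "G n x \<le> G (Suc n) x" for n x by (simp add: G_def)
  have Gmeas[measurable]: "G n \<in> borel_measurable M" for n using G[of n] Lp_setD(1) by blast
  define H where "H x = (SUP n. ennreal (G n x powr p))" for x
  have inc: "incseq (\<lambda>n x. ennreal (G n x powr p))"
  proof (intro incseq_SucI le_funI)
    fix n x show "ennreal (G n x powr p) \<le> ennreal (G (Suc n) x powr p)"
      using Gnn Gmono p0 by (intro ennreal_leI powr_mono2) auto
  qed
  have "(\<integral>\<^sup>+x. H x \<partial>M) = (SUP n. \<integral>\<^sup>+x. ennreal (G n x powr p) \<partial>M)"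
    unfolding H_def by (intro nn_integral_monotone_convergence_SUP[OF inc]) measurable
  also have "\<dots> \<le> ennreal (2 powr p)"
  proof (intro SUP_least)
    fix n
    have "(\<integral>\<^sup>+x. ennreal (G n x powr p) \<partial>M) = ennreal (Ip M p (G n))"
      using Lp_nn_Ip[of "G n"] G[of n] Gnn by simp
    then show "(\<integral>\<^sup>+x. ennreal (G n x powr p) \<partial>M) \<le> ennreal (2 powr p)"
      using Gb[of n] by (simp add: ennreal_leI)
  qed
  finally have "(\<integral>\<^sup>+x. H x \<partial>M) \<noteq> \<infinity>" by (auto simp: top_unique)
  then have AEH: "AE x in M. H x \<noteq> \<infinity>"
    by (intro nn_integral_PInf_AE) (auto simp: H_def)
  have conv: "convergent (\<lambda>n. s (r n) x)" if Hx: "H x \<noteq> \<infinity>" for x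
  proof -
    obtain B where B: "H x = ennreal B" "B \<ge> 0" using Hx by (cases "H x") auto
    have "ennreal (G n x powr p) \<le> ennreal B" for n
      unfolding B(1)[symmetric] H_def by (rule SUP_upper) simp
    hence Gp: "G n x powr p \<le> B" for n using B(2) by (simp add: ennreal_le_iff)
    have GB: "G n x \<le> B powr (1/p)" for n
    proof -
      have "(G n x powr p) powr (1/p) \<le> B powr (1/p)"
        using Gp[of n] p0 by (intro powr_mono2) auto
      then show ?thesis using Gnn[of n x] p0 by (simp add: powr_powr)
    qed
    have "summable (\<lambda>i. \<bar>d i x\<bar>)"
    proof (rule bounded_imp_summable)
      fix n show "(\<Sum>k\<le>n. \<bar>d k x\<bar>) \<le> B powr (1/p)"
        using GB[of "Suc n"] by (simp add: G_def lessThan_Suc_atMost)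
    qed simp
    hence sd: "summable (\<lambda>i. d i x)" by (rule summable_rabs_cancel)
    have "(\<lambda>n. \<Sum>i<n. d i x) \<longlonglongrightarrow> (\<Sum>i. d i x)" using sd by (rule summable_LIMSEQ)
    moreover have "(\<lambda>n. \<Sum>i<n. d i x) = (\<lambda>n. s (r n) x - s (r 0) x)"
      using sum_lessThan_telescope[of "\<lambda>i. s (r i) x"] by (simp add: d_def fdiff_def)
    ultimately have "(\<lambda>n. s (r n) x - s (r 0) x + s (r 0) x) \<longlonglongrightarrow> (\<Sum>i. d i x) + s (r 0) x"
      by (intro tendsto_add) auto
    then show ?thesis by (auto simp: convergent_def)
  qed
  define f where "f x = lim (\<lambda>n. s (r n) x)" for x
  have fmeas[measurable]: "f \<in> borel_measurable M" unfolding f_def by measurable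
  have AEconv: "AE x in M. (\<lambda>n. s (r n) x) \<longlonglongrightarrow> f x"
    using AEH by eventually_elim (use conv in \<open>auto simp: f_def convergent_LIMSEQ_iff\<close>)
  have key: "fdiff f (s (r n)) \<in> Lp_set M p \<and> Lp_norm M p (fdiff f (s (r n))) \<le> e"
    if e: "e > 0" and n: "\<forall>i\<ge>n0. \<forall>j\<ge>n0. Lp_norm M p (fdiff (s i) (s j)) < e" and nn: "n \<ge> n0" for e n0 n
  proof -
    define k where "k = r n"
    have kn: "k \<ge> n0" using seq_suble[OF sm, of n] nn by (simp add: k_def)
    have "AE x in M. (\<lambda>m. ennreal (\<bar>s (r m) x - s k x\<bar> powr p)) \<longlonglongrightarrow> ennreal (\<bar>f x - s k x\<bar> powr p)"
      using AEconv by eventually_elim (intro tendsto_ennrealI tendsto_intros, use p0 in auto)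
    hence "AE x in M. liminf (\<lambda>m. ennreal (\<bar>s (r m) x - s k x\<bar> powr p)) = ennreal (\<bar>f x - s k x\<bar> powr p)"
      by eventually_elim (simp add: lim_imp_Liminf)
    hence "(\<integral>\<^sup>+x. ennreal (\<bar>f x - s k x\<bar> powr p) \<partial>M) = (\<integral>\<^sup>+x. liminf (\<lambda>m. ennreal (\<bar>s (r m) x - s k x\<bar> powr p)) \<partial>M)"
      by (intro nn_integral_cong_AE) auto
    also have "\<dots> \<le> liminf (\<lambda>m. \<integral>\<^sup>+x. ennreal (\<bar>s (r m) x - s k x\<bar> powr p) \<partial>M)"
      by (intro nn_integral_liminf) measurable
    also have "\<dots> \<le> liminf (\<lambda>m. ennreal (e powr p))"
    proof (intro Liminf_mono eventually_sequentiallyI)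
      fix m assume m: "m \<ge> n0"
      have rm: "r m \<ge> n0" using seq_suble[OF sm, of m] m by simp
      have "Lp_norm M p (fdiff (s (r m)) (s k)) \<le> e" using n rm kn by (meson less_imp_le)
      hence "Ip M p (fdiff (s (r m)) (s k)) \<le> e powr p" using Lp_norm_le_iff[OF p0, of e M "fdiff (s (r m)) (s k)"] e by simp
      moreover have "(\<integral>\<^sup>+x. ennreal (\<bar>s (r m) x - s k x\<bar> powr p) \<partial>M) = ennreal (Ip M p (fdiff (s (r m)) (s k)))"
        using Lp_nn_Ip[OF Lp_diff[OF p1 s s]] by (simp add: fdiff_def)
      ultimately show "(\<integral>\<^sup>+x. ennreal (\<bar>s (r m) x - s k x\<bar> powr p) \<partial>M) \<le> ennreal (e powr p)"
        by (simp add: ennreal_leI)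
    qed
    also have "\<dots> = ennreal (e powr p)" by (simp add: Liminf_const)
    finally have fin: "(\<integral>\<^sup>+x. ennreal (\<bar>fdiff f (s k) x\<bar> powr p) \<partial>M) \<le> ennreal (e powr p)"
      by (simp add: fdiff_def)
    have fm: "fdiff f (s k) \<in> borel_measurable M" unfolding fdiff_def by measurable
    from Lp_from_nn[OF fm fin powr_ge_zero] e show ?thesis using Lp_norm_le_iff[OF p0, of e M "fdiff f (s k)"] by (auto simp: k_def)
  qed
  obtain n1 where n1: "\<forall>i\<ge>n1. \<forall>j\<ge>n1. Lp_norm M p (fdiff (s i) (s j)) < 1" using C[of 1] by auto
  have fdV: "fdiff f (s (r n1)) \<in> Lp_set M p" using key[OF _ n1] by auto
  have "f = (\<lambda>t. fdiff f (s (r n1)) t + s (r n1) t)" by (auto simp: fdiff_def)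
  hence fV: "f \<in> Lp_set M p" using Lp_add[OF p1 fdV s] by metis
  show ?thesis
  proof (intro bexI[OF _ fV] LIMSEQ_I)
    fix e :: real assume e: "e > 0"
    obtain n0 where n0: "\<forall>i\<ge>n0. \<forall>j\<ge>n0. Lp_norm M p (fdiff (s i) (s j)) < e/2" using C[of "e/2"] e by auto
    have kf: "Lp_norm M p (fdiff f (s (r n0))) \<le> e/2" using key[OF _ n0] e by auto
    show "\<exists>no. \<forall>n\<ge>no. norm (Lp_norm M p (fdiff (s n) f) - 0) < e"
    proof (intro exI[of _ n0] allI impI)
      fix n assume n: "n \<ge> n0"
      have "r n0 \<ge> n0" using seq_suble[OF sm] by simp
      hence a: "Lp_norm M p (fdiff (s n) (s (r n0))) < e/2" using n0 n by simp
      have "Lp_norm M p (fdiff (s n) f) \<le> Lp_norm M p (fdiff (s n) (s (r n0))) + Lp_norm M p (fdiff (s (r n0)) f)"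
        by (intro Lp_norm_fdiff_tri[OF p1] s fV)
      also have "\<dots> < e" using a kf Lp_norm_sym[OF p1, of M "s (r n0)" f] by simp
      finally show "norm (Lp_norm M p (fdiff (s n) f) - 0) < e" using Lp_norm_nonneg[of M p] by simp
    qed
  qed
qed

end


locale Lpl =
  fixes M :: "'a measure" and p :: real
  assumes p1: "1 < p"
begin

abbreviation V where "V \<equiv> Lp_set M p"
abbreviation N where "N \<equiv> Lp_norm M p"

lemma p0: "0 < p" using p1 by simp

lemma N_cong: "(\<And>t. f t = g t) \<Longrightarrow> N f = N g"
  by (metis ext)

lemma V_cong: "f \<in> V \<Longrightarrow> (\<And>t. f t = g t) \<Longrightarrow> g \<in> V"
  by (metis ext)

lemma lin_V: "f \<in> V \<Longrightarrow> g \<in> V \<Longrightarrow> (\<lambda>t. a * f t + b * g t) \<in> V"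
  using Lp_add[OF p1 Lp_scale[OF p1] Lp_scale[OF p1]] by blast

lemma lin_tri: "f \<in> V \<Longrightarrow> g \<in> V \<Longrightarrow> N (\<lambda>t. a * f t + b * g t) \<le> \<bar>a\<bar> * N f + \<bar>b\<bar> * N g"
proof -
  assume f: "f \<in> V" and g: "g \<in> V"
  have "N (\<lambda>t. a * f t + b * g t) \<le> N (\<lambda>t. a * f t) + N (\<lambda>t. b * g t)"
    by (rule Lp_norm_tri[OF p1 Lp_scale[OF p1 f] Lp_scale[OF p1 g]])
  then show ?thesis by (simp add: Lp_norm_scale[OF p1])
qed

lemma Ip_eq: "Ip M p f = N f powr p"
  by (rule Lp_norm_powr[OF p0, symmetric])

lemma N_zero_iff: "N f = 0 \<longleftrightarrow> Ip M p f = 0"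
  using Ip_nonneg[of M p f] by (simp add: Lp_norm_Ip)

lemma N_less_iff: "0 \<le> e \<Longrightarrow> N f < e \<longleftrightarrow> Ip M p f < e powr p"
proof
  assume e: "0 \<le> e" and "N f < e"
  then have "N f powr p < e powr p" using p0 Lp_norm_nonneg[of M p f] by (intro powr_less_mono2) auto
  then show "Ip M p f < e powr p" by (simp add: Ip_eq)
next
  assume e: "0 \<le> e" and I: "Ip M p f < e powr p"
  show "N f < e"
  proof (rule ccontr)
    assume "\<not> N f < e"
    then have "e powr p \<le> N f powr p" using p0 e by (intro powr_mono2) auto
    then show False using I by (simp add: Ip_eq)
  qed
qed

lemma UC_eq:
  assumes u: "u \<in> V" and v: "v \<in> V" and a: "N u = a" "N v = a" "N (\<lambda>t. (u t + v t)/2) = a"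
  shows "N (fdiff u v) = 0"
proof -
  have "Ip M p (fdiff u v) \<le> 0"
  proof (rule field_le_epsilon)
    fix e :: real assume e: "0 < e"
    define e' where "e' = e / (2 * (a powr p + 1))"
    have e': "0 < e'" unfolding e'_def using e by (intro divide_pos_pos mult_pos_pos) (auto intro: add_nonneg_pos)
    obtain K where "\<forall>u\<in>V. \<forall>v\<in>V. Ip M p (fdiff u v) \<le>
       e' * (Ip M p u + Ip M p v) + K * ((Ip M p u + Ip M p v)/2 - Ip M p (\<lambda>t. (u t + v t)/2))"
      using Lp_UC[OF p1 e'] by blast
    hence "Ip M p (fdiff u v) \<le> e' * (Ip M p u + Ip M p v) + K * ((Ip M p u + Ip M p v)/2 - Ip M p (\<lambda>t. (u t + v t)/2))"
      using u v by blast
    hence "Ip M p (fdiff u v) \<le> e' * (2 * a powr p)" using a by (simp add: Ip_eq)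
    also have "\<dots> \<le> e" unfolding e'_def using e
      by (simp add: field_simps add_pos_nonneg)
    finally show "Ip M p (fdiff u v) \<le> 0 + e" by simp
  qed
  then show ?thesis using Ip_nonneg[of M p "fdiff u v"] N_zero_iff by simp
qed

lemma par:
  assumes u: "u \<in> V" and v: "v \<in> V" and mid: "N (\<lambda>t. (u t + v t)/2) = (N u + N v)/2"
    and b: "N v > 0"
  shows "N (fdiff u (\<lambda>t. (N u / N v) * v t)) = 0"
proof (cases "N u = 0")
  case True
  then show ?thesis by (simp add: fdiff_def)
next
  case False
  define a where "a = N u"
  define b where "b = N v"
  have a0: "a > 0" using False Lp_norm_nonneg[of M p u] by (simp add: a_def)
  have b0: "b > 0" using assms by (simp add: b_def)
  define u' where "u' t = (1/a) * u t" for t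
  define v' where "v' t = (1/b) * v t" for t
  have u'V: "u' \<in> V" unfolding u'_def by (rule Lp_scale[OF p1 u])
  have v'V: "v' \<in> V" unfolding v'_def by (rule Lp_scale[OF p1 v])
  have Nu': "N u' = 1" unfolding u'_def Lp_norm_scale[OF p1] using a0 by (simp add: a_def)
  have Nv': "N v' = 1" unfolding v'_def Lp_norm_scale[OF p1] using b0 by (simp add: b_def)
  define m where "m t = (1/2) * u' t + (1/2) * v' t" for t
  have mV: "m \<in> V" unfolding m_def using lin_V[OF u'V v'V] .
  have m_le: "N m \<le> 1" unfolding m_def using lin_tri[OF u'V v'V, of "1/2" "1/2"] Nu' Nv' by simp
  define th where "th = a / (a + b)"
  have th: "0 < th" "th < 1" using a0 b0 by (auto simp: th_def)
  have wN: "N (\<lambda>t. th * u' t + (1 - th) * v' t) = 1"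
  proof -
    have t1: "th * u' t = u t / (a+b)" for t using a0 b0 by (simp add: th_def u'_def)
    have t2: "(1 - th) * v' t = v t / (a+b)" for t
    proof -
      have "1 - th = b / (a+b)" using a0 b0 by (simp add: th_def field_simps)
      then show ?thesis using b0 by (simp add: v'_def)
    qed
    have "(\<lambda>t. th * u' t + (1 - th) * v' t) = (\<lambda>t. (2 / (a+b)) * ((u t + v t)/2))"
      unfolding t1 t2 by (auto simp: add_divide_distrib)
    then have s: "N (\<lambda>t. th * u' t + (1 - th) * v' t) = \<bar>2/(a+b)\<bar> * N (\<lambda>t. (u t + v t)/2)"
      by (simp only: Lp_norm_scale[OF p1])
    have mid': "N (\<lambda>t. (u t + v t)/2) = (a+b)/2" using mid by (simp add: a_def b_def)
    show ?thesis unfolding s mid' using a0 b0 by simp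
  qed
  have "N m \<ge> 1"
  proof (cases "th \<le> 1/2")
    case True
    define mu where "mu = 2 * th"
    have mu: "0 < mu" "mu \<le> 1" using th True by (auto simp: mu_def)
    have "(\<lambda>t. th * u' t + (1 - th) * v' t) = (\<lambda>t. mu * m t + (1 - mu) * v' t)"
      by (auto simp: mu_def m_def field_simps)
    hence "1 \<le> mu * N m + (1 - mu) * 1"
      using wN lin_tri[OF mV v'V, of mu "1 - mu"] mu Nv' by simp
    then show ?thesis using mu by (simp add: algebra_simps)
  next
    case False
    define mu where "mu = 2 * (1 - th)"
    have mu: "0 < mu" "mu \<le> 1" using th False by (auto simp: mu_def)
    have "(\<lambda>t. th * u' t + (1 - th) * v' t) = (\<lambda>t. mu * m t + (1 - mu) * u' t)"
      by (auto simp: mu_def m_def field_simps)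
    hence "1 \<le> mu * N m + (1 - mu) * 1"
      using wN lin_tri[OF mV u'V, of mu "1 - mu"] mu Nu' by simp
    then show ?thesis using mu by (simp add: algebra_simps)
  qed
  hence Nm1: "N m = 1" using m_le by simp
  have "m = (\<lambda>t. (u' t + v' t)/2)" by (auto simp: m_def)
  hence Nm: "N (\<lambda>t. (u' t + v' t)/2) = 1" using Nm1 by simp
  have z: "N (fdiff u' v') = 0" by (rule UC_eq[OF u'V v'V Nu' Nv' Nm])
  have "fdiff u (\<lambda>t. (N u / N v) * v t) = (\<lambda>t. a * fdiff u' v' t)"
    using a0 b0 by (auto simp: fdiff_def u'_def v'_def a_def b_def field_simps)
  then show ?thesis using z by (simp add: Lp_norm_scale[OF p1])
qed

end


context Lpl
begin

lemma tendsto_fst_seq: "X \<longlonglongrightarrow> L \<Longrightarrow> ((\<lambda>z. X (fst z)) \<longlongrightarrow> L) (sequentially \<times>\<^sub>F sequentially)"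
  by (rule filterlim_compose[of X]) (auto simp: filterlim_def filtermap_fst_prod_filter)
lemma tendsto_snd_seq: "X \<longlonglongrightarrow> L \<Longrightarrow> ((\<lambda>z. X (snd z)) \<longlongrightarrow> L) (sequentially \<times>\<^sub>F sequentially)"
  by (rule filterlim_compose[of X]) (auto simp: filterlim_def filtermap_snd_prod_filter)

lemma N_sym: "N (fdiff a b) = N (fdiff b a)"
  by (rule Lp_norm_sym[OF p1])

context
  fixes C :: "('a \<Rightarrow> real) set"
  assumes cone: "is_cone V C" and cl: "cone_closed V N C"
begin

lemma C_V: "f \<in> C \<Longrightarrow> f \<in> V" using cone by (auto simp: is_cone_def)

lemma cone_scale: "f \<in> C \<Longrightarrow> 0 \<le> a \<Longrightarrow> (\<lambda>t. a * f t) \<in> C"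
proof -
  assume f: "f \<in> C" and a: "0 \<le> a"
  have "\<forall>f\<in>C. \<forall>c::real. c \<ge> 0 \<longrightarrow> (\<lambda>t. c * f t) \<in> C" using cone by (simp add: is_cone_def)
  then show ?thesis using f a by simp
qed

lemma cone_add: "f \<in> C \<Longrightarrow> g \<in> C \<Longrightarrow> (\<lambda>t. f t + g t) \<in> C"
proof -
  assume f: "f \<in> C" and g: "g \<in> C"
  have "\<forall>f\<in>C. \<forall>g\<in>C. (\<lambda>t. f t + g t) \<in> C" using cone by (simp add: is_cone_def)
  then show ?thesis using f g by simp
qed

lemma cone_lin: "f \<in> C \<Longrightarrow> g \<in> C \<Longrightarrow> 0 \<le> a \<Longrightarrow> 0 \<le> b \<Longrightarrow> (\<lambda>t. a * f t + b * g t) \<in> C"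
  using cone_add[OF cone_scale cone_scale] by blast

lemma null_closed:
  assumes "g \<in> C" "f \<in> V" "N (fdiff g f) = 0" shows "f \<in> C"
proof -
  have "(\<forall>n. (\<lambda>n. g) n \<in> C) \<and> f \<in> V \<and> (\<lambda>n. N (fdiff ((\<lambda>n. g) n) f)) \<longlonglongrightarrow> 0"
    using assms by simp
  moreover from cl have H: "(\<forall>n. s n \<in> C) \<and> f \<in> V \<and> (\<lambda>n. N (fdiff (s n) f)) \<longlonglongrightarrow> 0 \<longrightarrow> f \<in> C" for s
    unfolding cone_closed_def by blast
  ultimately show ?thesis using H[of "\<lambda>n. g"] by simp
qed

lemma C_cong: "g \<in> C \<Longrightarrow> (\<And>t. g t = f t) \<Longrightarrow> f \<in> C"
proof -
  assume "g \<in> C" "\<And>t. g t = f t"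
  moreover from this(2) have "g = f" by (rule ext)
  ultimately show ?thesis by simp
qed

lemma dir:
  assumes u1: "u1 \<in> C" and u2: "u2 \<in> V"
    and mid: "N (\<lambda>t. (u1 t + u2 t)/2) = (N u1 + N u2)/2" and lt: "N u2 < N u1"
  shows "fdiff u1 u2 \<in> C"
proof -
  have u1V: "u1 \<in> V" using C_V u1 by blast
  have pos: "N u1 > 0" using lt Lp_norm_nonneg[of M p u2] by linarith
  have mid': "N (\<lambda>t. (u2 t + u1 t)/2) = (N u2 + N u1)/2"
    using mid by (simp add: add.commute)
  define c where "c = N u2 / N u1"
  have c: "0 \<le> c" "c < 1" using pos lt Lp_norm_nonneg[of M p u2] by (auto simp: c_def)
  have z: "N (fdiff u2 (\<lambda>t. c * u1 t)) = 0" unfolding c_def by (rule par[OF u2 u1V mid' pos])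
  have gC: "(\<lambda>t. (1 - c) * u1 t) \<in> C" using cone_scale[OF u1] c by simp
  have "N (fdiff (\<lambda>t. (1 - c) * u1 t) (fdiff u1 u2)) = N (fdiff u2 (\<lambda>t. c * u1 t))"
    by (rule N_cong) (simp add: fdiff_def algebra_simps)
  then show ?thesis using null_closed[OF gC Lp_diff[OF p1 u1V u2]] z by simp
qed

context
  fixes x y :: "'a \<Rightarrow> real"
  assumes xV: "x \<in> V" and yV: "y \<in> V"
begin

abbreviation K where "K \<equiv> ubounds V C x y"
abbreviation sig where "sig \<equiv> sigma N x y"

lemma K_iff: "z \<in> K \<longleftrightarrow> z \<in> V \<and> fdiff z x \<in> C \<and> fdiff z y \<in> C"
  by (simp add: ubounds_def cle_def)

lemma sig_nonneg: "0 \<le> sig z"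
  by (simp add: sigma_def Lp_norm_nonneg add_nonneg_nonneg)

lemma K_nonempty:
  assumes gen: "cone_generating V N C"
  shows "K \<noteq> {}"
proof -
  obtain g h where g: "g \<in> C" and h: "h \<in> C" and gh: "N (fdiff (fdiff x y) (fdiff g h)) = 0"
  proof -
    have "fdiff x y \<in> V" using Lp_diff[OF p1 xV yV] .
    then have "\<exists>g\<in>C. \<exists>h\<in>C. N (fdiff (fdiff x y) (fdiff g h)) = 0"
      using gen unfolding cone_generating_def by (rule bspec[rotated])
    then show ?thesis using that by blast
  qed
  define z where "z t = x t + h t" for t
  have "z = (\<lambda>t. x t + h t)" by (auto simp: z_def)
  hence zV: "z \<in> V" using Lp_add[OF p1 xV C_V[OF h]] by simp
  have zx: "fdiff z x \<in> C" using h by (rule C_cong) (simp add: z_def fdiff_def)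
  have "N (fdiff g (fdiff z y)) = N (fdiff (fdiff x y) (fdiff g h))"
    by (subst N_sym) (rule N_cong, simp add: z_def fdiff_def)
  hence zy: "fdiff z y \<in> C" using null_closed[OF g Lp_diff[OF p1 zV yV]] gh by simp
  have "z \<in> K" unfolding K_iff using zV zx zy by simp
  then show ?thesis by blast
qed

lemma K_mid:
  assumes z: "z \<in> K" and w: "w \<in> K"
  shows "(\<lambda>t. (z t + w t)/2) \<in> K"
proof -
  have zz: "z \<in> V" "fdiff z x \<in> C" "fdiff z y \<in> C" using z unfolding K_iff by auto
  have ww: "w \<in> V" "fdiff w x \<in> C" "fdiff w y \<in> C" using w unfolding K_iff by auto
  have "(\<lambda>t. (1/2) * fdiff z x t + (1/2) * fdiff w x t) \<in> C" by (intro cone_lin zz ww) auto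
  hence a: "fdiff (\<lambda>t. (z t + w t)/2) x \<in> C" by (rule C_cong) (simp add: fdiff_def field_simps)
  have "(\<lambda>t. (1/2) * fdiff z y t + (1/2) * fdiff w y t) \<in> C" by (intro cone_lin zz ww) auto
  hence b: "fdiff (\<lambda>t. (z t + w t)/2) y \<in> C" by (rule C_cong) (simp add: fdiff_def field_simps)
  show ?thesis unfolding K_iff using a b Lp_mid[OF p1 zz(1) ww(1)] by simp
qed

lemma mid_fd: "fdiff (\<lambda>t. (z t + w t)/2) a = (\<lambda>t. (1/2) * fdiff z a t + (1/2) * fdiff w a t)"
  by (auto simp: fdiff_def field_simps)

lemma mid_fd2: "fdiff (\<lambda>t. (z t + w t)/2) a = (\<lambda>t. (fdiff z a t + fdiff w a t)/2)"
  by (auto simp: fdiff_def field_simps)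

lemma mid_bound:
  assumes "z \<in> V" "w \<in> V" "a \<in> V"
  shows "N (fdiff (\<lambda>t. (z t + w t)/2) a) \<le> (N (fdiff z a) + N (fdiff w a))/2"
  unfolding mid_fd using lin_tri[OF Lp_diff[OF p1 assms(1,3)] Lp_diff[OF p1 assms(2,3)], of "1/2" "1/2"]
  by simp


lemma exist_min:
  assumes gen: "cone_generating V N C"
  shows "\<exists>z. is_minimizer sig K z"
proof -
  define d where "d = Inf (sig ` K)"
  have ne: "sig ` K \<noteq> {}" using K_nonempty[OF gen] by simp
  have bdd: "bdd_below (sig ` K)" by (rule bdd_belowI[of _ 0]) (auto simp: sig_nonneg)
  have dle: "d \<le> sig z" if "z \<in> K" for z unfolding d_def using that bdd by (simp add: cInf_lower)
  have "\<exists>z\<in>K. sig z < d + inverse (real (Suc n))" for n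
  proof -
    have "Inf (sig ` K) < d + inverse (real (Suc n))" unfolding d_def by simp
    from cInf_lessD[OF ne this] show ?thesis by blast
  qed
  then have "\<forall>n. \<exists>z. z \<in> K \<and> sig z < d + inverse (real (Suc n))" by blast
  from choice[OF this] obtain z where zz: "\<forall>n. z n \<in> K \<and> sig (z n) < d + inverse (real (Suc n))"
    by blast
  have zK: "\<And>n. z n \<in> K" and zs: "\<And>n. sig (z n) < d + inverse (real (Suc n))" using zz by auto
  define a where "a n = N (fdiff (z n) x)" for n
  have a0: "0 \<le> a n" for n by (simp add: a_def Lp_norm_nonneg)
  have a1: "a n \<le> d + 1" for n
  proof -
    have "a n \<le> sig (z n)" by (simp add: a_def sigma_def Lp_norm_nonneg)
    also have "\<dots> \<le> d + 1"
    proof -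
      have "inverse (real (Suc n)) \<le> 1" by (simp add: inverse_le_1_iff)
      then show ?thesis using zs[of n] by linarith
    qed
    finally show ?thesis .
  qed
  obtain r where r: "strict_mono r" "monoseq (\<lambda>n. a (r n))" using seq_monosub by blast
  have "Bseq (\<lambda>n. a (r n))" using a0 a1 by (intro BseqI'[of _ "d + 1"]) auto
  then have "convergent (\<lambda>n. a (r n))" using r(2) by (rule Bseq_monoseq_convergent)
  then obtain al where al: "(\<lambda>n. a (r n)) \<longlonglongrightarrow> al" by (auto simp: convergent_def)
  have al0: "0 \<le> al" using al a0 by (intro LIMSEQ_le_const[OF al]) auto
  define w where "w n = z (r n)" for n
  have wK: "w n \<in> K" for n by (simp add: w_def zK)
  have wV: "w n \<in> V" for n using wK[of n] unfolding K_iff by simp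
  have sw: "(\<lambda>n. sig (w n)) \<longlonglongrightarrow> d"
  proof (rule tendsto_sandwich[of "\<lambda>n. d" _ _ "\<lambda>n. d + inverse (real (Suc n))"])
    show "\<forall>\<^sub>F n in sequentially. d \<le> sig (w n)" using dle wK by auto
    show "\<forall>\<^sub>F n in sequentially. sig (w n) \<le> d + inverse (real (Suc n))"
    proof (intro always_eventually allI)
      fix n
      have "n \<le> r n" using seq_suble[OF r(1)] by simp
      hence i: "inverse (real (Suc (r n))) \<le> inverse (real (Suc n))"
        by (intro le_imp_inverse_le) auto
      have "sig (w n) < d + inverse (real (Suc (r n)))" using zs[of "r n"] by (simp only: w_def)
      then show "sig (w n) \<le> d + inverse (real (Suc n))" using i by linarith
    qed
    show "(\<lambda>n. d + inverse (real (Suc n))) \<longlonglongrightarrow> d"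
      using tendsto_add[OF tendsto_const LIMSEQ_inverse_real_of_nat, of d] by simp
  qed simp
  have aw: "(\<lambda>n. N (fdiff (w n) x)) \<longlonglongrightarrow> al" using al by (simp add: a_def w_def)
  have bw: "(\<lambda>n. N (fdiff (w n) y)) \<longlonglongrightarrow> d - al"
  proof -
    have "(\<lambda>n. sig (w n) - N (fdiff (w n) x)) \<longlonglongrightarrow> d - al" by (intro tendsto_diff sw aw)
    then show ?thesis by (simp add: sigma_def)
  qed
  have cau: "\<exists>n0. \<forall>i\<ge>n0. \<forall>j\<ge>n0. N (fdiff (w i) (w j)) < e" if e: "e > 0" for e
  proof -
    define F where "F = (sequentially \<times>\<^sub>F sequentially :: (nat \<times> nat) filter)"
    define ee where "ee = e powr p / (4 * (al powr p + 1))"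
    have ee: "0 < ee" unfolding ee_def using e by (intro divide_pos_pos mult_pos_pos) (auto intro: add_nonneg_pos)
    obtain Kc where Kc: "\<forall>u\<in>V. \<forall>v\<in>V. Ip M p (fdiff u v) \<le>
       ee * (Ip M p u + Ip M p v) + Kc * ((Ip M p u + Ip M p v)/2 - Ip M p (\<lambda>t. (u t + v t)/2))"
      using Lp_UC[OF p1 ee] by blast
    define A where "A ij = N (fdiff (w (fst ij)) x)" for ij :: "nat \<times> nat"
    define B where "B ij = N (fdiff (w (snd ij)) x)" for ij :: "nat \<times> nat"
    define Mx where "Mx ij = N (fdiff (\<lambda>t. (w (fst ij) t + w (snd ij) t)/2) x)" for ij :: "nat \<times> nat"
    define Lo where "Lo ij = d - (N (fdiff (w (fst ij)) y) + N (fdiff (w (snd ij)) y))/2" for ij :: "nat \<times> nat"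
    have A: "(A \<longlongrightarrow> al) F" unfolding A_def F_def by (rule tendsto_fst_seq[OF aw])
    have B: "(B \<longlongrightarrow> al) F" unfolding B_def F_def by (rule tendsto_snd_seq[OF aw])
    have Lo: "(Lo \<longlongrightarrow> al) F"
    proof -
      have "(Lo \<longlongrightarrow> d - ((d - al) + (d - al))/2) F" unfolding Lo_def F_def
        by (intro tendsto_intros tendsto_fst_seq[OF bw] tendsto_snd_seq[OF bw]) simp
      moreover have "d - ((d - al) + (d - al))/2 = al" by (simp add: field_simps)
      ultimately show ?thesis by simp
    qed
    have Mx_up: "Mx ij \<le> (A ij + B ij)/2" for ij
      unfolding Mx_def A_def B_def by (rule mid_bound[OF wV wV xV])
    have Mx_lo: "Lo ij \<le> Mx ij" for ij
    proof -
      have "d \<le> sig (\<lambda>t. (w (fst ij) t + w (snd ij) t)/2)" by (intro dle K_mid wK)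
      moreover have "N (fdiff (\<lambda>t. (w (fst ij) t + w (snd ij) t)/2) y) \<le>
          (N (fdiff (w (fst ij)) y) + N (fdiff (w (snd ij)) y))/2" by (rule mid_bound[OF wV wV yV])
      ultimately show ?thesis unfolding Lo_def Mx_def sigma_def by linarith
    qed
    have Mx: "(Mx \<longlongrightarrow> al) F"
    proof (rule tendsto_sandwich[OF _ _ Lo])
      show "\<forall>\<^sub>F ij in F. Lo ij \<le> Mx ij" using Mx_lo by simp
      show "\<forall>\<^sub>F ij in F. Mx ij \<le> (A ij + B ij)/2" using Mx_up by simp
      have "((\<lambda>ij. (A ij + B ij)/2) \<longlongrightarrow> (al + al)/2) F"
        by (rule tendsto_divide[OF tendsto_add[OF A B] tendsto_const]) simp
      then show "((\<lambda>ij. (A ij + B ij)/2) \<longlongrightarrow> al) F" by simp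
    qed
    define R where "R ij = ee * (A ij powr p + B ij powr p) + Kc * ((A ij powr p + B ij powr p)/2 - Mx ij powr p)" for ij
    have Anonneg: "\<forall>\<^sub>F ij in F. 0 \<le> A ij" by (simp add: A_def Lp_norm_nonneg)
    have Bnonneg: "\<forall>\<^sub>F ij in F. 0 \<le> B ij" by (simp add: B_def Lp_norm_nonneg)
    have Mnonneg: "\<forall>\<^sub>F ij in F. 0 \<le> Mx ij" by (simp add: Mx_def Lp_norm_nonneg)
    have R: "(R \<longlongrightarrow> ee * (al powr p + al powr p) + Kc * ((al powr p + al powr p)/2 - al powr p)) F"
      unfolding R_def
      by (intro tendsto_intros A B Mx) (use p0 Anonneg Bnonneg Mnonneg in auto)
    have lim_lt: "ee * (al powr p + al powr p) + Kc * ((al powr p + al powr p)/2 - al powr p) < e powr p"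
    proof -
      have pos: "al powr p + 1 \<noteq> 0" using powr_ge_zero[of al p] by linarith
      have "ee * (al powr p + al powr p) = e powr p * (al powr p / (2 * (al powr p + 1)))"
        unfolding ee_def using pos by (simp add: field_simps)
      also have "\<dots> < e powr p * 1"
      proof (intro mult_strict_left_mono)
        have h: "0 \<le> al powr p" by simp
        have "0 < 2 * (al powr p + 1)" using h by (simp add: algebra_simps add_pos_nonneg)
        moreover have "al powr p < 2 * (al powr p + 1)" using h by (simp add: algebra_simps add_pos_nonneg)
        ultimately show "al powr p / (2 * (al powr p + 1)) < 1" by (simp only: divide_less_eq_1_pos)
      qed (use e in simp)
      finally show ?thesis by simp
    qed
    have ev: "\<forall>\<^sub>F ij in F. R ij < e powr p" by (rule order_tendstoD(2)[OF R lim_lt])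
    have "\<forall>\<^sub>F ij in F. N (fdiff (w (fst ij)) (w (snd ij))) < e"
    proof (rule eventually_mono[OF ev])
      fix ij assume Rlt: "R ij < e powr p"
      define u where "u = fdiff (w (fst ij)) x"
      define v where "v = fdiff (w (snd ij)) x"
      have uV: "u \<in> V" and vV: "v \<in> V" unfolding u_def v_def by (intro Lp_diff[OF p1] wV xV)+
      have "Ip M p (fdiff u v) \<le> ee * (Ip M p u + Ip M p v) + Kc * ((Ip M p u + Ip M p v)/2 - Ip M p (\<lambda>t. (u t + v t)/2))"
        using Kc uV vV by simp
      moreover have "fdiff u v = fdiff (w (fst ij)) (w (snd ij))" by (auto simp: u_def v_def fdiff_def)
      moreover have "(\<lambda>t. (u t + v t)/2) = fdiff (\<lambda>t. (w (fst ij) t + w (snd ij) t)/2) x"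
        by (auto simp: u_def v_def fdiff_def field_simps)
      ultimately have "Ip M p (fdiff (w (fst ij)) (w (snd ij))) \<le> R ij"
        by (simp add: R_def Ip_eq A_def B_def Mx_def u_def v_def)
      then show "N (fdiff (w (fst ij)) (w (snd ij))) < e" using Rlt N_less_iff e by simp
    qed
    then obtain n0 where "\<forall>m\<ge>n0. \<forall>n\<ge>n0. N (fdiff (w n) (w m)) < e"
      unfolding F_def eventually_prod_sequentially by auto
    then show ?thesis by blast
  qed
  obtain f where fV: "f \<in> V" and fl: "(\<lambda>n. N (fdiff (w n) f)) \<longlonglongrightarrow> 0"
    using Lp_complete[OF p1 wV cau] by blast
  from cl have H: "(\<forall>n. s n \<in> C) \<and> g \<in> V \<and> (\<lambda>n. N (fdiff (s n) g)) \<longlonglongrightarrow> 0 \<longrightarrow> g \<in> C" for s g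
    unfolding cone_closed_def by blast
  have fC: "fdiff f a \<in> C" if aV: "a \<in> V" and wa: "\<And>n. fdiff (w n) a \<in> C" for a
  proof -
    have "(\<lambda>n. N (fdiff (fdiff (w n) a) (fdiff f a))) = (\<lambda>n. N (fdiff (w n) f))"
      by (intro ext N_cong) (simp add: fdiff_def)
    then show ?thesis using H[of "\<lambda>n. fdiff (w n) a" "fdiff f a"] wa fl Lp_diff[OF p1 fV aV] by simp
  qed
  have wxC: "fdiff (w n) x \<in> C" and wyC: "fdiff (w n) y \<in> C" for n using wK[of n] unfolding K_iff by auto
  have fK: "f \<in> K" unfolding K_iff using fV fC[OF xV wxC] fC[OF yV wyC] by simp
  have sf: "sig f \<le> sig (w n) + 2 * N (fdiff (w n) f)" for n
  proof -
    have "N (fdiff f x) \<le> N (fdiff f (w n)) + N (fdiff (w n) x)" by (rule Lp_norm_fdiff_tri[OF p1 fV wV xV])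
    moreover have "N (fdiff f y) \<le> N (fdiff f (w n)) + N (fdiff (w n) y)" by (rule Lp_norm_fdiff_tri[OF p1 fV wV yV])
    moreover have "N (fdiff f (w n)) = N (fdiff (w n) f)" by (rule N_sym)
    ultimately show ?thesis by (simp add: sigma_def)
  qed
  have "(\<lambda>n. sig (w n) + 2 * N (fdiff (w n) f)) \<longlonglongrightarrow> d + 2 * 0" by (intro tendsto_intros sw fl)
  hence "sig f \<le> d" using sf by (intro LIMSEQ_le_const[of _ d]) auto
  hence "is_minimizer sig K f" unfolding is_minimizer_def using fK dle by (auto intro: order_trans)
  then show ?thesis by blast
qed

lemma uniq_min:
  assumes pr: "cone_proper N C" and m1: "is_minimizer sig K z1" and m2: "is_minimizer sig K z2"
  shows "N (fdiff z1 z2) = 0"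
proof -
  have z1: "z1 \<in> K" and z2: "z2 \<in> K" using m1 m2 by (auto simp: is_minimizer_def)
  have z1V: "z1 \<in> V" "fdiff z1 x \<in> C" "fdiff z1 y \<in> C" using z1 unfolding K_iff by auto
  have z2V: "z2 \<in> V" "fdiff z2 x \<in> C" "fdiff z2 y \<in> C" using z2 unfolding K_iff by auto
  have eq: "sig z1 = sig z2" using m1 m2 z1 z2 unfolding is_minimizer_def by (meson order_antisym)
  define m where "m = (\<lambda>t. (z1 t + z2 t)/2)"
  have mK: "m \<in> K" unfolding m_def by (rule K_mid[OF z1 z2])
  have "sig z1 \<le> sig m" using m1 mK by (simp add: is_minimizer_def)
  moreover have mx: "N (fdiff m x) \<le> (N (fdiff z1 x) + N (fdiff z2 x))/2" unfolding m_def by (rule mid_bound[OF z1V(1) z2V(1) xV])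
  moreover have my: "N (fdiff m y) \<le> (N (fdiff z1 y) + N (fdiff z2 y))/2" unfolding m_def by (rule mid_bound[OF z1V(1) z2V(1) yV])
  ultimately have ex: "N (fdiff m x) = (N (fdiff z1 x) + N (fdiff z2 x))/2"
    and ey: "N (fdiff m y) = (N (fdiff z1 y) + N (fdiff z2 y))/2"
    using eq by (simp_all add: sigma_def)
  have fmx: "fdiff m a = (\<lambda>t. (fdiff z1 a t + fdiff z2 a t)/2)" for a unfolding m_def by (rule mid_fd2)
  have fmx': "fdiff m a = (\<lambda>t. (fdiff z2 a t + fdiff z1 a t)/2)" for a unfolding fmx by (auto simp: add.commute)
  have d12: "fdiff (fdiff z1 a) (fdiff z2 a) = fdiff z1 z2" for a by (auto simp: fdiff_def)
  have d21: "fdiff (fdiff z2 a) (fdiff z1 a) = fdiff z2 z1" for a by (auto simp: fdiff_def)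
  have sumeq: "N (fdiff z1 x) + N (fdiff z1 y) = N (fdiff z2 x) + N (fdiff z2 y)" using eq by (simp add: sigma_def)
  show ?thesis
  proof (cases "N (fdiff z1 x) = N (fdiff z2 x)")
    case True
    have "N (fdiff (fdiff z1 x) (fdiff z2 x)) = 0"
      by (rule UC_eq[OF Lp_diff[OF p1 z1V(1) xV] Lp_diff[OF p1 z2V(1) xV] refl True[symmetric]])
         (use ex True fmx in simp)
    then show ?thesis by (simp add: d12)
  next
    case False
    have both: "fdiff z1 z2 \<in> C \<and> fdiff z2 z1 \<in> C"
    proof (cases "N (fdiff z1 x) > N (fdiff z2 x)")
      case True
      have a: "fdiff z1 z2 \<in> C"
        using dir[OF z1V(2) Lp_diff[OF p1 z2V(1) xV] _ True] ex fmx d12 by simp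
      have "N (fdiff z2 y) > N (fdiff z1 y)" using True sumeq by linarith
      then have b: "fdiff z2 z1 \<in> C"
        using dir[OF z2V(3) Lp_diff[OF p1 z1V(1) yV]] ey fmx' d21 by (simp add: add.commute)
      show ?thesis using a b by simp
    next
      case F2: False
      then have lt: "N (fdiff z2 x) > N (fdiff z1 x)" using False by linarith
      have a: "fdiff z2 z1 \<in> C"
        using dir[OF z2V(2) Lp_diff[OF p1 z1V(1) xV] _ lt] ex fmx' d21 by (simp add: add.commute)
      have "N (fdiff z1 y) > N (fdiff z2 y)" using lt sumeq by linarith
      then have b: "fdiff z1 z2 \<in> C"
        using dir[OF z1V(3) Lp_diff[OF p1 z2V(1) yV]] ey fmx d12 by simp
      show ?thesis using a b by simp
    qed
    have neg: "(\<lambda>t. - fdiff z1 z2 t) \<in> C" using both by (rule C_cong[OF conjunct2]) (simp add: fdiff_def)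
    have "\<forall>f\<in>C. (\<lambda>t. - f t) \<in> C \<longrightarrow> N f = 0" using pr by (simp add: cone_proper_def)
    then show ?thesis using both neg by blast
  qed
qed


abbreviation MU where "MU \<equiv> mubounds V N C x y"

lemma MU_sub: "MU \<subseteq> K" by (auto simp: mubounds_def)

lemma ups_in_mu:
  assumes pr: "cone_proper N C" and mono: "cone_monotone N C" and m: "is_minimizer sig K z"
  shows "z \<in> MU"
proof -
  have zK: "z \<in> K" using m by (simp add: is_minimizer_def)
  have zz: "z \<in> V" "fdiff z x \<in> C" "fdiff z y \<in> C" using zK unfolding K_iff by auto
  have "N (fdiff z w) = 0" if wK: "w \<in> K" and wz: "cle C w z" for w
  proof -
    have ww: "w \<in> V" "fdiff w x \<in> C" "fdiff w y \<in> C" using wK unfolding K_iff by auto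
    have zw: "fdiff z w \<in> C" using wz by (simp add: cle_def)
    have mono': "N f \<le> N g" if "f \<in> C" "fdiff g f \<in> C" for f g
      using mono that unfolding cone_monotone_def by blast
    have e: "fdiff (fdiff z a) (fdiff w a) = fdiff z w" for a by (auto simp: fdiff_def)
    have "N (fdiff w x) \<le> N (fdiff z x)" by (rule mono'[OF ww(2)]) (simp add: e zw)
    moreover have "N (fdiff w y) \<le> N (fdiff z y)" by (rule mono'[OF ww(3)]) (simp add: e zw)
    ultimately have "sig w \<le> sig z" by (simp add: sigma_def)
    hence "is_minimizer sig K w" using m wK unfolding is_minimizer_def by (meson order_trans)
    hence "N (fdiff w z) = 0" using uniq_min[OF pr _ m] by blast
    then show ?thesis by (simp add: N_sym)
  qed
  then show ?thesis using zK by (auto simp: mubounds_def)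
qed

lemma ups_ql_xy:
  assumes pr: "cone_proper N C" and gen: "cone_generating V N C"
  shows "K \<noteq> {} \<and> (\<exists>z. is_minimizer sig K z) \<and>
      (\<forall>z z'. is_minimizer sig K z \<and> is_minimizer sig K z' \<longrightarrow> N (fdiff z z') = 0)"
  using K_nonempty[OF gen] exist_min[OF gen] uniq_min[OF pr] by blast

lemma mu_ql_xy:
  assumes pr: "cone_proper N C" and gen: "cone_generating V N C" and mono: "cone_monotone N C"
  shows "MU \<noteq> {} \<and> (\<exists>z. is_minimizer sig MU z) \<and>
      (\<forall>z z'. is_minimizer sig MU z \<and> is_minimizer sig MU z' \<longrightarrow> N (fdiff z z') = 0)"
    and "\<forall>z z'. is_minimizer sig K z \<and> is_minimizer sig MU z' \<longrightarrow> N (fdiff z z') = 0"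
proof -
  obtain z where zm: "is_minimizer sig K z" using exist_min[OF gen] by blast
  have zMU: "z \<in> MU" by (rule ups_in_mu[OF pr mono zm])
  have zmu: "is_minimizer sig MU z" using zm zMU MU_sub unfolding is_minimizer_def by blast
  have lift: "is_minimizer sig K z'" if "is_minimizer sig MU z'" for z'
  proof -
    have "z' \<in> K" using that MU_sub by (auto simp: is_minimizer_def)
    moreover have "sig z' \<le> sig z" using that zMU by (simp add: is_minimizer_def)
    ultimately show ?thesis using zm unfolding is_minimizer_def by (meson order_trans)
  qed
  show "MU \<noteq> {} \<and> (\<exists>z. is_minimizer sig MU z) \<and>
      (\<forall>z z'. is_minimizer sig MU z \<and> is_minimizer sig MU z' \<longrightarrow> N (fdiff z z') = 0)"
    using zMU zmu lift uniq_min[OF pr] by blast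
  show "\<forall>z z'. is_minimizer sig K z \<and> is_minimizer sig MU z' \<longrightarrow> N (fdiff z z') = 0"
    using lift uniq_min[OF pr] by blast
qed

end

lemma main_C:
  assumes pr: "cone_proper N C" and gen: "cone_generating V N C"
  shows "upsilon_quasi_lattice V N C \<and>
        (cone_monotone N C \<longrightarrow> mu_quasi_lattice V N C \<and> quasi_suprema_coincide V N C)"
proof -
  have U: "upsilon_quasi_lattice V N C"
    unfolding upsilon_quasi_lattice_def quasi_lattice_wrt_def
    using cl ups_ql_xy[OF _ _ pr gen] by blast
  have "mu_quasi_lattice V N C \<and> quasi_suprema_coincide V N C" if mono: "cone_monotone N C"
    unfolding mu_quasi_lattice_def quasi_lattice_wrt_def quasi_suprema_coincide_def
    using cl mu_ql_xy[OF _ _ pr gen mono] by blast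
  then show ?thesis using U by blast
qed

end

lemma claim: "Lp_claim M p"
  unfolding Lp_claim_def Let_def
  using main_C by blast

end

lemma Lp_claim_all: "1 < p \<Longrightarrow> Lp_claim M p"
  by (rule Lpl.claim) (unfold_locales)



theorem corollary6p3:
  fixes M :: "'a measure" and p :: real
  assumes "1 < p"
  shows "Lp_claim M p \<and>
         Lp_claim (count_space (UNIV :: nat set)) p \<and>
         (\<forall>n::nat. Lp_claim (count_space {..<n}) p)"
  by (intro conjI allI Lp_claim_all[OF assms])

end
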